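(* Let $f_0(x)=x^4+12x^3+14x^2-12x+1$ and $f_{1728}(x)=x^4+18x^3+74x^2-18x+1$, and let $l$ be a prime. (a) If $l\equiv 4\pmod 5$ and $\left(\frac{-3}{l}\right)=-1$, then $f_0(x)$ splits into distinct linear factors modulo $l$. (b) If $l\equiv 4\pmod 5$ and $\left(\frac{-4}{l}\right)=-1$, then $f_{1728}(x)$ splits into distinct linear factors modulo $l$. (c) If $l\equiv 1\pmod 5$ and $\left(\frac{-3}{l}\right)=-1$, then $f_0(x)$ factors modulo $l$ as a product of two irreducible quadratics of the form $x^2+ax-1$. (d) If $l\equiv 1\pmod 5$ and $\left(\frac{-4}{l}\right)=-1$, then $f_{1728}(x)$ factors modulo $l$ as a product of two irreducible quadratics of the form $x^2+ax-1$.
   Context: $\left(\frac{\cdot}{l}\right)$ denotes the Kronecker/Legendre symbol. *)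

theory Defs
  imports "Berlekamp_Zassenhaus.Finite_Field" "HOL-Number_Theory.Number_Theory"
begin

definition f0 :: "int poly" where
  "f0 = [:1, -12, 14, 12, 1:]"

definition f1728 :: "int poly" where
  "f1728 = [:1, -18, 74, 18, 1:]"

definition red :: "int poly \<Rightarrow> 'p::prime_card mod_ring poly" where
  "red f = map_poly of_int f"

end

theory Submission
  imports Defs "Berlekamp_Zassenhaus.Berlekamp_Type_Based"
begin

lemma of_int_cong_mod_ring:
  "(of_int x :: 'a::nontriv mod_ring) = of_int y \<longleftrightarrow> [x = y] (mod int CARD('a))"
  unfolding of_int_of_int_mod_ring cong_def by transfer simp

lemma quadres_mod_ring:
  "QuadRes (int CARD('a::nontriv)) a \<longleftrightarrow> (\<exists>y::'a mod_ring. y^2 = of_int a)"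
proof
  assume "QuadRes (int CARD('a)) a"
  then obtain y where "[y^2 = a] (mod int CARD('a))" unfolding QuadRes_def by blast
  then have "(of_int (y^2) :: 'a mod_ring) = of_int a" using of_int_cong_mod_ring by blast
  then show "\<exists>y::'a mod_ring. y^2 = of_int a" by (intro exI[of _ "of_int y"]) simp
next
  assume "\<exists>y::'a mod_ring. y^2 = of_int a"
  then obtain y :: "'a mod_ring" where y: "y^2 = of_int a" by blast
  have "y = of_int (to_int_mod_ring y)" unfolding of_int_of_int_mod_ring by simp
  then have "(of_int ((to_int_mod_ring y)^2) :: 'a mod_ring) = of_int a" using y
    by (metis of_int_power)
  then show "QuadRes (int CARD('a)) a" unfolding QuadRes_def using of_int_cong_mod_ring by blast
qed

lemma irred2:
  fixes a :: "'a::field"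
  assumes "\<And>r. poly [:-1,a,1:] r \<noteq> 0"
  shows "irreducible [:-1,a,1:]"
proof (rule irreducibleI)
  show "[:-1,a,1:] \<noteq> 0" by simp
  show "\<not> is_unit [:-1,a,1:]" by (simp add: is_unit_iff_degree)
  fix q r assume qr: "[:-1,a,1:] = q*r"
  then have q0: "q \<noteq> 0" and r0: "r \<noteq> 0" by auto
  have d: "degree q + degree r = 2" using qr q0 r0 by (metis degree_mult_eq degree_pCons_eq_if one_neq_zero pCons_eq_0_iff numeral_2_eq_2 degree_0 zero_neq_one) 
  show "is_unit q \<or> is_unit r"
  proof (cases "degree q = 1")
    case True
    define x where "x = - coeff q 0 / coeff q 1"
    have c1: "coeff q 1 \<noteq> 0" using True q0 by (metis leading_coeff_0_iff)
    have "poly q x = 0" unfolding poly_altdef True x_def using c1 by simp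
    then have "poly [:-1,a,1:] x = 0" using qr by simp
    with assms show ?thesis by blast
  next
    case False
    then have "degree q = 0 \<or> degree r = 0" using d by linarith
    then show ?thesis using q0 r0 by (auto simp: is_unit_iff_degree)
  qed
qed

lemma of_nat_eq_0_mod_ring: "(of_nat n :: 'a::prime_card mod_ring) = 0 \<longleftrightarrow> CARD('a) dvd n"
  using of_nat_0_mod_ring_dvd by (metis dvd_def of_nat_card_eq_0 of_nat_mult mult_zero_left)

lemma euler_mod_ring:
  fixes x :: "'a::prime_card mod_ring"
  assumes "CARD('a) > 2" "x \<noteq> 0"
  shows "x ^ ((CARD('a) - 1) div 2) = (if \<exists>y. y^2 = x then 1 else -1)"
proof -
  define a where "a = to_int_mod_ring x"
  have xa: "x = of_int a" unfolding a_def of_int_of_int_mod_ring by simp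
  have e: "[Legendre a (int CARD('a)) = a ^ ((CARD('a) - 1) div 2)] (mod int CARD('a))"
    using euler_criterion[OF prime_card assms(1)] by simp
  have "(of_int (Legendre a (int CARD('a))) :: 'a mod_ring) = of_int (a ^ ((CARD('a) - 1) div 2))"
    using e of_int_cong_mod_ring by blast
  then have 1: "(of_int (Legendre a (int CARD('a))) :: 'a mod_ring) = x ^ ((CARD('a) - 1) div 2)"
    using xa by simp
  have n0: "\<not> [a = 0] (mod int CARD('a))" using assms(2) xa of_int_cong_mod_ring[of a 0, where 'a='a] by simp
  have q: "QuadRes (int CARD('a)) a \<longleftrightarrow> (\<exists>y. y^2 = x)" using quadres_mod_ring[of a, where 'a='a] xa by simp
  show ?thesis using 1 n0 q unfolding Legendre_def by (auto split: if_splits)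
qed

lemma nonsq_mult:
  fixes x y :: "'a::prime_card mod_ring"
  assumes "CARD('a) > 2" "x \<noteq> 0" "y \<noteq> 0" "\<not>(\<exists>w. w^2 = x)" "\<not>(\<exists>w. w^2 = y)"
  shows "\<exists>w. w^2 = x * y"
proof (rule ccontr)
  assume nz: "\<not> (\<exists>w. w^2 = x * y)"
  have 2: "(2::'a mod_ring) \<noteq> 0" using of_nat_eq_0_mod_ring[of 2, where 'a='a] assms(1)
    by (auto dest: dvd_imp_le)
  have "(x*y) ^ ((CARD('a) - 1) div 2) = -1" using euler_mod_ring[OF assms(1), of "x*y"] nz assms by simp
  moreover have "(x*y) ^ ((CARD('a) - 1) div 2) = 1"
    using euler_mod_ring[OF assms(1) assms(2)] euler_mod_ring[OF assms(1) assms(3)] assms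
    by (simp add: power_mult_distrib)
  ultimately have "(-1::'a mod_ring) = 1" by simp
  then have "(2::'a mod_ring) = 0"
    by (metis one_add_one add.right_inverse)
  with 2 show False by simp
qed

lemma sqrt5_mod_ring:
  assumes "CARD('a::prime_card) mod 5 = 1 \<or> CARD('a) mod 5 = 4"
  shows "\<exists>s::'a mod_ring. s^2 = 5"
proof -
  let ?l = "CARD('a)"
  have "\<not> prime (4::nat)" "\<not> prime (6::nat)" "\<not> prime (9::nat)"
    using prime_product[of 2 2] prime_product[of 2 3] prime_product[of 3 3] by auto
  then have "?l \<noteq> 1" "?l \<noteq> 4" "?l \<noteq> 6" "?l \<noteq> 9" using prime_card[where 'a='a] by auto
  then have l11: "?l \<ge> 11" using assms by presburger
  have lm: "int ?l mod 5 = 1 \<or> int ?l mod 5 = 4" using assms by (metis of_nat_mod of_nat_1 of_nat_numeral)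
  have L1: "Legendre (int ?l) 5 = 1"
  proof -
    have "\<not> [int ?l = 0] (mod 5)" using lm by (auto simp: cong_def)
    moreover have "QuadRes 5 (int ?l)" unfolding QuadRes_def cong_def
      using lm by (auto intro: exI[of _ 1] exI[of _ 2])
    ultimately show ?thesis unfolding Legendre_def by simp
  qed
  have "Legendre (int 5) (int ?l) * Legendre (int ?l) (int 5) = (-1::int) ^ ((5 - 1) div 2 * ((?l - 1) div 2))"
    by (rule Quadratic_Reciprocity) (use l11 prime_card[where 'a='a] in auto)
  then have "Legendre 5 (int ?l) = 1" using L1 by (simp add: power_mult)
  then have "QuadRes (int ?l) 5" unfolding Legendre_def by (auto split: if_splits)
  then show ?thesis using quadres_mod_ring[of 5, where 'a='a] by simp
qed

lemma card_ge11:
  assumes "CARD('a::prime_card) mod 5 = 1 \<or> CARD('a) mod 5 = 4"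
  shows "CARD('a) \<ge> 11"
proof -
  let ?l = "CARD('a)"
  have "\<not> prime (4::nat)" "\<not> prime (6::nat)" "\<not> prime (9::nat)"
    using prime_product[of 2 2] prime_product[of 2 3] prime_product[of 3 3] by auto
  then have "?l \<noteq> 1" "?l \<noteq> 4" "?l \<noteq> 6" "?l \<noteq> 9" using prime_card[where 'a='a] by auto
  then show "?l \<ge> 11" using assms by presburger
qed

lemma small_nonzero:
  assumes "CARD('a::prime_card) \<ge> 11" "0 < n" "n \<le> 10"
  shows "(of_nat n :: 'a mod_ring) \<noteq> 0"
  using assms of_nat_eq_0_mod_ring[of n, where 'a='a] by (auto dest: dvd_imp_le)

lemma no_5th_root:
  fixes z :: "'a::prime_card mod_ring"
  assumes "CARD('a) mod 5 = 4" "z^5 = 1"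
  shows "z = 1"
proof -
  let ?l = "CARD('a)"
  obtain m where m: "?l = 5*m + 4" using assms(1) by (metis mod_mult_div_eq add.commute)
  have z0: "z \<noteq> 0" using assms(2) by auto
  have "z ^ ?l = z" by (rule fermat_theorem_mod_ring)
  have eq: "CARD('a) = Suc (5*m+3)" using m by simp
  have "z ^ (Suc (5*m+3)) = z" using fermat_theorem_mod_ring[of z] unfolding eq .
  then have "z * z ^ (5*m+3) = z" by (metis power_Suc)
  then have 1: "z ^ (5*m+3) = 1" using z0 by simp
  have "z ^ ((5*m+3)*2) = 1" unfolding power_mult using 1 by simp
  moreover have "z ^ ((5*m+3)*2) = (z^5)^(2*m+1) * z"
  proof -
    have e: "(5*m+3)*2 = 5*(2*m+1)+1" by simp
    show ?thesis unfolding e power_add power_mult by simp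
  qed
  ultimately show ?thesis using assms(2) by simp
qed

lemma exists_5th_root:
  assumes "CARD('a::prime_card) mod 5 = 1"
  shows "\<exists>z::'a mod_ring. z^5 = 1 \<and> z \<noteq> 1"
proof -
  let ?l = "CARD('a)"
  have l11: "?l \<ge> 11" using card_ge11[where 'a='a] assms by simp
  obtain m where m: "?l = 5*m + 1" using assms by (metis mod_mult_div_eq add.commute)
  have m1: "m \<ge> 1" using l11 m by simp
  define p :: "'a mod_ring poly" where "p = monom 1 m + [:-1:]"
  have dp: "degree p = m" unfolding p_def using m1
    by (subst degree_add_eq_left) (simp_all add: degree_monom_eq)
  have p0: "p \<noteq> 0" using dp m1 by auto
  have "card {x. poly p x = 0} \<le> m" using card_poly_roots_bound[OF p0] dp by simp
  moreover have "card (UNIV - {0::'a mod_ring}) = 5*m" using m by (simp add: card_Diff_singleton)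
  ultimately have "\<not> (UNIV - {0::'a mod_ring}) \<subseteq> {x. poly p x = 0}"
  proof (intro notI)
    assume a: "card {x. poly p x = 0} \<le> m" "card (UNIV - {0::'a mod_ring}) = 5*m"
      "UNIV - {0} \<subseteq> {x. poly p x = 0}"
    then have "card (UNIV - {0::'a mod_ring}) \<le> card {x. poly p x = 0}" by (intro card_mono) auto
    with a m1 show False by simp
  qed
  then obtain x :: "'a mod_ring" where x0: "x \<noteq> 0" and px: "poly p x \<noteq> 0" by blast
  have xm: "x ^ m \<noteq> 1" using px unfolding p_def by (simp add: poly_monom)
  have "x ^ ?l = x" by (rule fermat_theorem_mod_ring)
  then have "x * x ^ (5*m) = x" using m by simp
  then have "(x^m)^5 = 1" using x0 by (simp add: power_mult[symmetric] mult.commute)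
  then show ?thesis using xm by blast
qed

lemma cert_s: fixes L R s q :: "'a::comm_ring_1"
  assumes "L - R = q*(s^2-5)" "s^2 = 5" shows "L = R" using assms by simp

lemma cert_sx: fixes L R s x q1 q2 :: "'a::comm_ring_1"
  assumes "L - R = q1*(x^2+2*s+10) + q2*(s^2-5)" "x^2 = -2*(5+s)" "s^2 = 5" shows "L = R"
proof -
  have "x^2+2*s+10 = 0" using assms(2) by (simp add: algebra_simps)
  then show ?thesis using assms(1,3) by simp
qed

lemma cert_z: fixes L R z q :: "'a::comm_ring_1"
  assumes "L - R = q*(z^4+z^3+z^2+z+1)" "z^4+z^3+z^2+z+1 = 0" shows "L = R" using assms by simp

lemma lin_prod: fixes x y :: "'a::comm_ring_1"
  shows "[:-x,1:]*[:-y,1:] = [:x*y, -(x+y), 1:]"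
  by (simp add: algebra_simps)

lemma quad_prod: fixes a b :: "'a::comm_ring_1"
  shows "[:-1,a,1:]*[:-1,b,1:] = [:1, -(a+b), a*b - 2, a+b, 1:]"
  by (simp add: algebra_simps)

lemma idI1: fixes x s :: "'a::comm_ring_1" shows "((s-1+x)^5) - (1024) = (x ^ 3 + 5*x ^ 2*s - 5*x ^ 2 + 10*x*s ^ 2 - 22*x*s + 10*s ^ 3 - 40*s ^ 2 - 10*s + 40)*(x^2+2*s+10) + (5*x*s ^ 2 - 40*x*s - x + s ^ 3 - 25*s ^ 2 - 5*s + 285)*(s^2-5)" by (simp add: algebra_simps power2_eq_square eval_nat_numeral)

lemma idI2: fixes z :: "'a::comm_ring_1" shows "((2*(z+z^4)+1)^2) - (5) = (4*z ^ 4 - 4*z ^ 3 + 8*z - 4)*(z^4+z^3+z^2+z+1)" by (simp add: algebra_simps power2_eq_square eval_nat_numeral)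

lemma idI3: fixes z :: "'a::comm_ring_1" shows "((2*(z-z^4))^2) - (-2*(5+(2*(z+z^4)+1))) = (4*z ^ 4 - 4*z ^ 3 - 8*z + 12)*(z^4+z^3+z^2+z+1)" by (simp add: algebra_simps power2_eq_square eval_nat_numeral)

lemma idI4: fixes x s :: "'a::comm_ring_1" shows "(((6+2*s)^2+4)*(x*(1+s))^2) - (-3*(8*(5+2*s))^2) = (4*s ^ 4 + 32*s ^ 3 + 92*s ^ 2 + 104*s + 40)*(x^2+2*s+10) + (-8*s ^ 3 - 104*s ^ 2 - 544*s - 880)*(s^2-5)" by (simp add: algebra_simps power2_eq_square eval_nat_numeral)

lemma idI5: fixes x s :: "'a::comm_ring_1" shows "(((6-2*s)^2+4)*(x*(1+s))^2) - (-3*(8*s)^2) = (4*s ^ 4 - 16*s ^ 3 - 4*s ^ 2 + 56*s + 40)*(x^2+2*s+10) + (-8*s ^ 3 - 8*s ^ 2 + 128*s + 80)*(s^2-5)" by (simp add: algebra_simps power2_eq_square eval_nat_numeral)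

lemma idI8: fixes x s :: "'a::comm_ring_1" shows "((5+2*s)*(5-2*s)) - (5) = 0*(x^2+2*s+10) + (-4)*(s^2-5)" by (simp add: algebra_simps power2_eq_square eval_nat_numeral)

lemma idI9: fixes x s :: "'a::comm_ring_1" shows "((6+2*s)*(6-2*s)) - (16) = 0*(x^2+2*s+10) + (-4)*(s^2-5)" by (simp add: algebra_simps power2_eq_square eval_nat_numeral)

lemma idI10: fixes x s :: "'a::comm_ring_1" shows "((9+s)*(9-s)) - (76) = 0*(x^2+2*s+10) + (-1)*(s^2-5)" by (simp add: algebra_simps power2_eq_square eval_nat_numeral)

lemma idI11: fixes x s :: "'a::comm_ring_1" shows "(((9+s)^2+4)*x^2) - (-1*(6*(5+s))^2) = (s ^ 2 + 18*s + 85)*(x^2+2*s+10) + (-2*s - 10)*(s^2-5)" by (simp add: algebra_simps power2_eq_square eval_nat_numeral)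

lemma idI12: fixes x s :: "'a::comm_ring_1" shows "(((9-s)^2+4)*x^2) - (-1*(12*s)^2) = (s ^ 2 - 18*s + 85)*(x^2+2*s+10) + (-2*s + 170)*(s^2-5)" by (simp add: algebra_simps power2_eq_square eval_nat_numeral)

lemma idI13: fixes x s :: "'a::comm_ring_1" shows "((5+s)*(5-s)) - (20) = 0*(x^2+2*s+10) + (-1)*(s^2-5)" by (simp add: algebra_simps power2_eq_square eval_nat_numeral)

lemma idI14: fixes x s :: "'a::comm_ring_1" shows "(((6+2*s)^2+4)*((6-2*s)^2+4)) - ((12*s)^2) = 0*(x^2+2*s+10) + (16*s ^ 2 - 320)*(s^2-5)" by (simp add: algebra_simps power2_eq_square eval_nat_numeral)

lemma idI16: fixes x s :: "'a::comm_ring_1" shows "((1+s)*(1-s)) - (-4) = 0*(x^2+2*s+10) + (-1)*(s^2-5)" by (simp add: algebra_simps power2_eq_square eval_nat_numeral)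

lemma idI17: fixes x s :: "'a::comm_ring_1" shows "(((9+s)^2+4)*((9-s)^2+4)) - ((36*s)^2) = 0*(x^2+2*s+10) + (s ^ 2 - 1445)*(s^2-5)" by (simp add: algebra_simps power2_eq_square eval_nat_numeral)

lemma idI15b: fixes x s :: "'a::comm_ring_1" shows "(-12*((6+2*s)^2+4)) - (-2*(5+s)*(3*(1+s))^2) = 0*(x^2+2*s+10) + (18*s + 78)*(s^2-5)" by (simp add: algebra_simps power2_eq_square eval_nat_numeral)

lemma idI18b: fixes x s :: "'a::comm_ring_1" shows "(-1*((9+s)^2+4)) - (-2*(5+s)*3^2) = 0*(x^2+2*s+10) + (-1)*(s^2-5)" by (simp add: algebra_simps power2_eq_square eval_nat_numeral)



lemma id58: fixes s :: "'a::comm_ring_1" shows "(5-s)^2 - (-2*(5+s)) = 8*(5-s) + 1*(s^2-5)" by (simp add: algebra_simps power2_eq_square eval_nat_numeral)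
lemma idq1: fixes a r :: "'a::comm_ring_1" shows "4*(r^2 + a*r - 1) = (2*r)^2 + 2*a*(2*r) - 4" by (simp add: algebra_simps power2_eq_square eval_nat_numeral)
lemma idq2: fixes a y :: "'a::comm_ring_1" shows "(y-a)^2 + 2*a*(y-a) - 4 = y^2 - a^2 - 4" by (simp add: algebra_simps power2_eq_square eval_nat_numeral)
lemma idsep: fixes a b x :: "'a::comm_ring_1" shows "(a-b)*x = (x^2+a*x-1) - (x^2+b*x-1)" by (simp add: algebra_simps power2_eq_square eval_nat_numeral)
lemma idr2: fixes a r1 :: "'a::comm_ring_1" shows "(-a-r1)^2 + a*(-a-r1) - 1 = r1^2 + a*r1 - 1" by (simp add: algebra_simps power2_eq_square eval_nat_numeral)
lemma idr12: fixes a r1 :: "'a::comm_ring_1" shows "r1*(-a-r1) = -1 - (r1^2 + a*r1 - 1)" by (simp add: algebra_simps power2_eq_square eval_nat_numeral)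
lemma idr3: fixes a r1 :: "'a::comm_ring_1" shows "r1 - (-a - r1) = 2*r1 + a" by (simp add: algebra_simps power2_eq_square eval_nat_numeral)
lemma idirr: fixes a r :: "'a::comm_ring_1" shows "(2*r+a)^2 = 4*(r^2 + a*r - 1) + (a^2+4)" by (simp add: algebra_simps power2_eq_square eval_nat_numeral)
lemma idphi: fixes z :: "'a::comm_ring_1" shows "z^5 - 1 = (z-1)*(z^4+z^3+z^2+z+1)" by (simp add: algebra_simps power2_eq_square eval_nat_numeral)

lemma quad_root:
  fixes a y r :: "'a::field"
  assumes two: "(2::'a) \<noteq> 0" and "y^2 = a^2+4" "2*r = y - a"
  shows "r^2 + a*r - 1 = 0"
proof -
  have "4*(r^2 + a*r - 1) = (2*r)^2 + 2*a*(2*r) - 4" by (rule idq1)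
  also have "\<dots> = (y-a)^2 + 2*a*(y-a) - 4" by (simp only: assms(3))
  also have "\<dots> = y^2 - a^2 - 4" by (rule idq2)
  also have "\<dots> = 0" using assms(2) by simp
  finally have "4*(r^2 + a*r - 1) = 0" .
  then have "(4::'a) = 0 \<or> r^2 + a*r - 1 = 0" by (simp only: mult_eq_0_iff)
  moreover have "(4::'a) \<noteq> 0"
  proof -
    have "(4::'a) = 2*2" by simp
    then show ?thesis using two by (metis mult_eq_0_iff)
  qed
  ultimately show ?thesis by blast
qed

lemma sep_roots:
  fixes a b x w :: "'a::field"
  assumes "x^2 + a*x - 1 = 0" "w^2 + b*w - 1 = 0" "a \<noteq> b"
  shows "x \<noteq> w"
proof
  assume xw: "x = w"
  have "(a-b)*x = (x^2+a*x-1) - (x^2+b*x-1)" by (rule idsep)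
  then have "(a-b)*x = 0" using assms(1,2) xw by simp
  moreover have "x \<noteq> 0" using assms(1) by auto
  ultimately show False using assms(3) by simp
qed

lemma split2:
  fixes a y :: "'a::field"
  assumes two: "(2::'a) \<noteq> 0" and y: "y^2 = a^2+4" "y \<noteq> 0"
  shows "\<exists>r1 r2. r1 \<noteq> r2 \<and> r1^2 + a*r1 - 1 = 0 \<and> r2^2 + a*r2 - 1 = 0 \<and> [:-r1,1:]*[:-r2,1:] = [:-1,a,1:]"
proof -
  define r1 where "r1 = (y - a)/2"
  have r1: "2*r1 = y - a" using two by (simp add: r1_def)
  define r2 where "r2 = -a - r1"
  have p1: "r1^2 + a*r1 - 1 = 0" using quad_root[OF two y(1) r1] .
  have "r2^2 + a*r2 - 1 = r1^2 + a*r1 - 1" unfolding r2_def by (rule idr2)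
  with p1 have p2: "r2^2 + a*r2 - 1 = 0" by simp
  have "r1*r2 = -1 - (r1^2 + a*r1 - 1)" unfolding r2_def by (rule idr12)
  with p1 have m: "r1*r2 = -1" by simp
  have ha: "-(r1+r2) = a" unfolding r2_def by simp
  have pr: "[:-r1,1:]*[:-r2,1:] = [:-1,a,1:]" by (simp only: lin_prod m ha)
  have "r1 - r2 = 2*r1 + a" unfolding r2_def by (rule idr3)
  also have "\<dots> = y" using r1 by simp
  finally have "r1 \<noteq> r2" using y(2) by auto
  with p1 p2 pr show ?thesis by blast
qed

lemma split4:
  fixes a b y u :: "'a::field"
  assumes two: "(2::'a) \<noteq> 0" and "y^2 = a^2+4" "u^2 = b^2+4" "y \<noteq> 0" "u \<noteq> 0" "a \<noteq> b"
  shows "\<exists>R. card R = 4 \<and> [:-1,a,1:]*[:-1,b,1:] = (\<Prod>r\<in>R. [:-r,1:])"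
proof -
  obtain r1 r2 where A: "r1 \<noteq> r2" "r1^2 + a*r1 - 1 = 0" "r2^2 + a*r2 - 1 = 0" "[:-r1,1:]*[:-r2,1:] = [:-1,a,1:]"
    using split2[OF two assms(2) assms(4)] by blast
  obtain r3 r4 where B: "r3 \<noteq> r4" "r3^2 + b*r3 - 1 = 0" "r4^2 + b*r4 - 1 = 0" "[:-r3,1:]*[:-r4,1:] = [:-1,b,1:]"
    using split2[OF two assms(3) assms(5)] by blast
  have d: "r1 \<noteq> r3" "r1 \<noteq> r4" "r2 \<noteq> r3" "r2 \<noteq> r4"
    using sep_roots[OF A(2) B(2) assms(6)] sep_roots[OF A(2) B(3) assms(6)]
      sep_roots[OF A(3) B(2) assms(6)] sep_roots[OF A(3) B(3) assms(6)] by auto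
  have c: "card {r1,r2,r3,r4} = 4" using A(1) B(1) d by simp
  have "(\<Prod>r\<in>{r1,r2,r3,r4}. [:-r,1:]) = [:-r1,1:]*([:-r2,1:]*([:-r3,1:]*[:-r4,1:]))"
    using A(1) B(1) d by simp
  also have "\<dots> = ([:-r1,1:]*[:-r2,1:])*([:-r3,1:]*[:-r4,1:])" by (simp only: mult.assoc)
  also have "\<dots> = [:-1,a,1:]*[:-1,b,1:]" using A(4) B(4) by simp
  finally show ?thesis using c by metis
qed

lemma irr_of_nsq:
  fixes a :: "'a::field"
  assumes "\<not>(\<exists>y. y^2 = a^2+4)"
  shows "irreducible [:-1,a,1:]"
proof (rule irred2)
  fix r
  show "poly [:-1,a,1:] r \<noteq> 0"
  proof
    assume "poly [:-1,a,1:] r = 0"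
    then have r: "r^2 + a*r - 1 = 0" by (simp add: algebra_simps power2_eq_square)
    have "(2*r+a)^2 = 4*(r^2 + a*r - 1) + (a^2+4)" by (rule idirr)
    then have "(2*r+a)^2 = a^2+4" using r by simp
    with assms show False by blast
  qed
qed

lemma nsq:
  fixes D k m n :: "'a::field"
  assumes "\<not>(\<exists>v. v^2 = k)" "m \<noteq> 0" "D * n^2 = k * m^2"
  shows "\<not>(\<exists>y. y^2 = D)"
proof
  assume "\<exists>y. y^2 = D"
  then obtain y where y: "y^2 = D" by blast
  have "(y*n/m)^2 = D * n^2 / m^2" using y by (simp add: power_divide power_mult_distrib)
  also have "\<dots> = k" using assms(2,3) by simp
  finally show False using assms(1) by blast
qed

lemma numeral_nz:
  assumes "CARD('a::prime_card) \<ge> 11" "numeral k \<le> (10::nat)"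
  shows "(numeral k :: 'a mod_ring) \<noteq> 0"
  using small_nonzero[OF assms(1), of "numeral k"] assms(2) by simp

lemma legendre_nsq:
  assumes "Legendre a (int CARD('a::prime_card)) = -1"
  shows "\<not>(\<exists>y::'a mod_ring. y^2 = of_int a)"
proof -
  have "\<not> QuadRes (int CARD('a)) a" using assms unfolding Legendre_def by (auto split: if_splits)
  then show ?thesis using quadres_mod_ring[of a, where 'a='a] by simp
qed

lemma contra_C:
  fixes s g q :: "'a::prime_card mod_ring"
  assumes l4: "CARD('a) mod 5 = 4" and s: "s^2 = 5" and q: "q \<noteq> 0" and g: "g^2 = -2*(5+s)*q^2"
  shows False
proof -
  have l11: "CARD('a) \<ge> 11" using card_ge11[where 'a='a] l4 by simp
  have n2: "(2::'a mod_ring) \<noteq> 0" and n4: "(4::'a mod_ring) \<noteq> 0" and n5: "(5::'a mod_ring) \<noteq> 0"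
    and n8: "(8::'a mod_ring) \<noteq> 0"
    using numeral_nz[OF l11] by auto
  define x where "x = g/q"
  have x: "x^2 = -2*(5+s)" using g q unfolding x_def by (simp add: power_divide)
  define z where "z = (s-1+x)/4"
  have z4: "4*z = s-1+x" using n4 unfolding z_def by simp
  have "(s-1+x)^5 = 1024" by (rule cert_sx[OF idI1 x s])
  then have "(4*z)^5 = 4^5" using z4 by simp
  then have "4^5 * z^5 = 4^5 * 1" by (simp only: power_mult_distrib mult_1_right)
  moreover have "(4::'a mod_ring)^5 \<noteq> 0" by (rule power_not_zero[OF n4])
  ultimately have "z^5 = 1" using mult_left_cancel by blast
  then have "z = 1" using no_5th_root[OF l4] by blast
  then have "x = 5 - s" using z4 by (simp add: algebra_simps)
  then have "(5-s)^2 = -2*(5+s)" using x by simp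
  moreover have "(5-s)^2 - (-2*(5+s)) = 8*(5-s) + 1*(s^2-5)" by (rule id58)
  ultimately have "8*(5-s) = 0" using s by simp
  then have "(8::'a mod_ring) = 0 \<or> 5 - s = 0" by (simp only: mult_eq_0_iff)
  then have "5 - s = 0" using n8 by blast
  then have "s = 5" by simp
  then have e: "(25::'a mod_ring) = 5" using s by simp
  have "(4::'a mod_ring)*5 = 25 - 5" by simp
  also have "\<dots> = 0" using e by simp
  finally have "(4::'a mod_ring)*5 = 0" .
  then have "(4::'a mod_ring) = 0 \<or> (5::'a mod_ring) = 0" by (simp only: mult_eq_0_iff)
  then show False using n4 n5 by blast
qed

lemma cert_s0: fixes L R s x q :: "'a::comm_ring_1"
  assumes "L - R = 0*(x^2+2*s+10) + q*(s^2-5)" "s^2 = 5" shows "L = R" using assms by simp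

lemma nz_prod: fixes a b :: "'a::idom" assumes "c = a*b" "a \<noteq> 0" "b \<noteq> 0" shows "c \<noteq> 0"
  using assms by simp

lemma case_a:
  assumes l4: "CARD('a::prime_card) mod 5 = 4" and leg: "Legendre (-3) (int CARD('a)) = -1"
  shows "\<exists>R::'a mod_ring set. card R = 4 \<and> (red f0 :: 'a mod_ring poly) = (\<Prod>r\<in>R. [:-r,1:])"
proof -
  have l11: "CARD('a) \<ge> 11" using card_ge11[where 'a='a] l4 by simp
  have c2: "CARD('a) > 2" using l11 by simp
  have n2: "(2::'a mod_ring) \<noteq> 0" and n3: "(3::'a mod_ring) \<noteq> 0" and n4: "(4::'a mod_ring) \<noteq> 0"
    and n5: "(5::'a mod_ring) \<noteq> 0"
    using numeral_nz[OF l11] by auto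
  have n12: "(12::'a mod_ring) \<noteq> 0" by (rule nz_prod[OF _ n3 n4]) simp
  obtain s :: "'a mod_ring" where s: "s^2 = 5" using sqrt5_mod_ring[where 'a='a] l4 by auto
  have s0: "s \<noteq> 0" using s n5 by auto
  have m3: "\<not>(\<exists>v::'a mod_ring. v^2 = -3)" using legendre_nsq[OF leg] by simp
  define a where "a = 6+2*s"
  define b where "b = 6-2*s"
  have DD: "(a^2+4)*(b^2+4) = (12*s)^2" unfolding a_def b_def by (rule cert_s0[OF idI14 s])
  have "(12*s)^2 \<noteq> 0" using n12 s0 by (metis power_not_zero mult_eq_0_iff)
  then have Da0: "a^2+4 \<noteq> 0" and Db0: "b^2+4 \<noteq> 0" using DD by auto
  have sq: "\<exists>y. y^2 = a^2+4"
  proof (rule ccontr)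
    assume ns: "\<not> (\<exists>y. y^2 = a^2+4)"
    have "(-3::'a mod_ring) \<noteq> 0" using n3 by simp
    then obtain w where w: "w^2 = -3*(a^2+4)" using nonsq_mult[OF c2 _ Da0 m3 ns] by blast
    have e15: "-12*(a^2+4) = -2*(5+s)*(3*(1+s))^2" unfolding a_def by (rule cert_s0[OF idI15b s])
    have "(2*w)^2 = 4*w^2" by (simp add: power_mult_distrib)
    also have "\<dots> = -12*(a^2+4)" using w by simp
    also have "\<dots> = -2*(5+s)*(3*(1+s))^2" by (rule e15)
    finally have g: "(2*w)^2 = -2*(5+s)*(3*(1+s))^2" .
    have e16: "(1+s)*(1-s) = -4" by (rule cert_s0[OF idI16 s])
    have "1+s \<noteq> 0"
    proof
      assume "1+s = 0"
      then have "(-4::'a mod_ring) = 0" using e16 by simp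
      then show False using n4 by simp
    qed
    then have "3*(1+s) \<noteq> 0" using n3 by (metis mult_eq_0_iff)
    from contra_C[OF l4 s this g] show False .
  qed
  obtain y where y: "y^2 = a^2+4" using sq by blast
  have y0: "y \<noteq> 0" using y Da0 by auto
  define u where "u = 12*s/y"
  have u: "u^2 = b^2+4"
  proof -
    have "u^2 = (12*s)^2 / y^2" unfolding u_def by (simp add: power_divide)
    also have "\<dots> = (a^2+4)*(b^2+4) / (a^2+4)" using y DD by simp
    also have "\<dots> = b^2+4" using Da0 by simp
    finally show ?thesis .
  qed
  have u0: "u \<noteq> 0" using u Db0 by auto
  have "a - b = 4*s" unfolding a_def b_def by simp
  then have ab: "a \<noteq> b" using n4 s0 by auto
  obtain R where R: "card R = 4" "[:-1,a,1:]*[:-1,b,1:] = (\<Prod>r\<in>R. [:-r,1:])"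
    using split4[OF n2 y u y0 u0 ab] by blast
  have "(red f0 :: 'a mod_ring poly) = [:-1,a,1:]*[:-1,b,1:]"
  proof -
    have ab16: "a*b = 16" unfolding a_def b_def by (rule cert_s0[OF idI9 s])
    have "a+b = 12" unfolding a_def b_def by simp
    then show ?thesis unfolding quad_prod using ab16 by (simp add: red_def f0_def)
  qed
  then show ?thesis using R by metis
qed

lemma case_b:
  assumes l4: "CARD('a::prime_card) mod 5 = 4" and leg: "Legendre (-4) (int CARD('a)) = -1"
  shows "\<exists>R::'a mod_ring set. card R = 4 \<and> (red f1728 :: 'a mod_ring poly) = (\<Prod>r\<in>R. [:-r,1:])"
proof -
  have l11: "CARD('a) \<ge> 11" using card_ge11[where 'a='a] l4 by simp
  have c2: "CARD('a) > 2" using l11 by simp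
  have n2: "(2::'a mod_ring) \<noteq> 0" and n3: "(3::'a mod_ring) \<noteq> 0" and n4: "(4::'a mod_ring) \<noteq> 0"
    and n5: "(5::'a mod_ring) \<noteq> 0" and n9: "(9::'a mod_ring) \<noteq> 0"
    using numeral_nz[OF l11] by auto
  have n36: "(36::'a mod_ring) \<noteq> 0" by (rule nz_prod[OF _ n4 n9]) simp
  obtain s :: "'a mod_ring" where s: "s^2 = 5" using sqrt5_mod_ring[where 'a='a] l4 by auto
  have s0: "s \<noteq> 0" using s n5 by auto
  have m4: "\<not>(\<exists>v::'a mod_ring. v^2 = -4)" using legendre_nsq[OF leg] by simp
  have m1: "\<not>(\<exists>v::'a mod_ring. v^2 = -1)"
  proof
    assume "\<exists>v::'a mod_ring. v^2 = -1"
    then obtain v :: "'a mod_ring" where v: "v^2 = -1" by blast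
    have "(2*v)^2 = 4*v^2" by (simp add: power_mult_distrib)
    also have "\<dots> = -4" using v by simp
    finally show False using m4 by blast
  qed
  define a where "a = 9+s"
  define b where "b = 9-s"
  have DD: "(a^2+4)*(b^2+4) = (36*s)^2" unfolding a_def b_def by (rule cert_s0[OF idI17 s])
  have "(36*s)^2 \<noteq> 0" using n36 s0 by (metis power_not_zero mult_eq_0_iff)
  then have Da0: "a^2+4 \<noteq> 0" and Db0: "b^2+4 \<noteq> 0" using DD by auto
  have sq: "\<exists>y. y^2 = a^2+4"
  proof (rule ccontr)
    assume ns: "\<not> (\<exists>y. y^2 = a^2+4)"
    have "(-1::'a mod_ring) \<noteq> 0" by simp
    then obtain w where w: "w^2 = -1*(a^2+4)" using nonsq_mult[OF c2 _ Da0 m1 ns] by blast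
    have e18: "-1*(a^2+4) = -2*(5+s)*3^2" unfolding a_def by (rule cert_s0[OF idI18b s])
    have g: "w^2 = -2*(5+s)*3^2" using w e18 by simp
    from contra_C[OF l4 s n3 g] show False .
  qed
  obtain y where y: "y^2 = a^2+4" using sq by blast
  have y0: "y \<noteq> 0" using y Da0 by auto
  define u where "u = 36*s/y"
  have u: "u^2 = b^2+4"
  proof -
    have "u^2 = (36*s)^2 / y^2" unfolding u_def by (simp add: power_divide)
    also have "\<dots> = (a^2+4)*(b^2+4) / (a^2+4)" using y DD by simp
    also have "\<dots> = b^2+4" using Da0 by simp
    finally show ?thesis .
  qed
  have u0: "u \<noteq> 0" using u Db0 by auto
  have "a - b = 2*s" unfolding a_def b_def by simp
  then have ab: "a \<noteq> b" using n2 s0 by auto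
  obtain R where R: "card R = 4" "[:-1,a,1:]*[:-1,b,1:] = (\<Prod>r\<in>R. [:-r,1:])"
    using split4[OF n2 y u y0 u0 ab] by blast
  have "(red f1728 :: 'a mod_ring poly) = [:-1,a,1:]*[:-1,b,1:]"
  proof -
    have ab76: "a*b = 76" unfolding a_def b_def by (rule cert_s0[OF idI10 s])
    have "a+b = 18" unfolding a_def b_def by simp
    then show ?thesis unfolding quad_prod using ab76 by (simp add: red_def f1728_def)
  qed
  then show ?thesis using R by metis
qed

lemma prim5:
  assumes "CARD('a::prime_card) mod 5 = 1"
  shows "\<exists>z::'a mod_ring. z^4+z^3+z^2+z+1 = 0"
proof -
  obtain z :: "'a mod_ring" where z: "z^5 = 1" "z \<noteq> 1" using exists_5th_root[OF assms] by blast
  have "(z-1)*(z^4+z^3+z^2+z+1) = z^5 - 1" using idphi[of z] by simp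
  also have "\<dots> = 0" using z by simp
  finally have "z^4+z^3+z^2+z+1 = 0" using z(2) by simp
  then show ?thesis by blast
qed

lemma case_c:
  assumes l1: "CARD('a::prime_card) mod 5 = 1" and leg: "Legendre (-3) (int CARD('a)) = -1"
  shows "\<exists>a b :: 'a mod_ring. (red f0 :: 'a mod_ring poly) = [:-1, a, 1:] * [:-1, b, 1:]
          \<and> irreducible [:-1, a, 1:] \<and> irreducible [:-1, b, 1:]"
proof -
  have l11: "CARD('a) \<ge> 11" using card_ge11[where 'a='a] l1 by simp
  have n2: "(2::'a mod_ring) \<noteq> 0" and n5: "(5::'a mod_ring) \<noteq> 0" and n8: "(8::'a mod_ring) \<noteq> 0"
    using numeral_nz[OF l11] by auto
  have m3: "\<not>(\<exists>v::'a mod_ring. v^2 = -3)" using legendre_nsq[OF leg] by simp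
  obtain z :: "'a mod_ring" where phi: "z^4+z^3+z^2+z+1 = 0" using prim5[OF l1] by blast
  define s where "s = 2*(z+z^4)+1"
  define x where "x = 2*(z-z^4)"
  have s: "s^2 = 5" unfolding s_def by (rule cert_z[OF idI2 phi])
  have x: "x^2 = -2*(5+s)" unfolding x_def s_def by (rule cert_z[OF idI3 phi])
  have s0: "s \<noteq> 0" using s n5 by auto
  define a where "a = 6+2*s"
  define b where "b = 6-2*s"
  have e8: "(5+2*s)*(5-2*s) = 5" by (rule cert_s0[OF idI8 s])
  have "5+2*s \<noteq> 0" using e8 n5 by auto
  then have m1: "8*(5+2*s) \<noteq> 0" using n8 by (metis mult_eq_0_iff)
  have m2: "8*s \<noteq> 0" using n8 s0 by simp
  have e4: "(a^2+4)*(x*(1+s))^2 = -3*(8*(5+2*s))^2" unfolding a_def by (rule cert_sx[OF idI4 x s])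
  have e5: "(b^2+4)*(x*(1+s))^2 = -3*(8*s)^2" unfolding b_def by (rule cert_sx[OF idI5 x s])
  have ia: "irreducible [:-1,a,1:]" by (rule irr_of_nsq, rule nsq[OF m3 m1 e4])
  have ib: "irreducible [:-1,b,1:]" by (rule irr_of_nsq, rule nsq[OF m3 m2 e5])
  have "(red f0 :: 'a mod_ring poly) = [:-1,a,1:]*[:-1,b,1:]"
  proof -
    have ab16: "a*b = 16" unfolding a_def b_def by (rule cert_s0[OF idI9 s])
    have "a+b = 12" unfolding a_def b_def by simp
    then show ?thesis unfolding quad_prod using ab16 by (simp add: red_def f0_def)
  qed
  then show ?thesis using ia ib by blast
qed

lemma case_d:
  assumes l1: "CARD('a::prime_card) mod 5 = 1" and leg: "Legendre (-4) (int CARD('a)) = -1"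
  shows "\<exists>a b :: 'a mod_ring. (red f1728 :: 'a mod_ring poly) = [:-1, a, 1:] * [:-1, b, 1:]
          \<and> irreducible [:-1, a, 1:] \<and> irreducible [:-1, b, 1:]"
proof -
  have l11: "CARD('a) \<ge> 11" using card_ge11[where 'a='a] l1 by simp
  have n2: "(2::'a mod_ring) \<noteq> 0" and n3: "(3::'a mod_ring) \<noteq> 0" and n4: "(4::'a mod_ring) \<noteq> 0"
    and n5: "(5::'a mod_ring) \<noteq> 0" and n6: "(6::'a mod_ring) \<noteq> 0"
    using numeral_nz[OF l11] by auto
  have n12: "(12::'a mod_ring) \<noteq> 0" by (rule nz_prod[OF _ n3 n4]) simp
  have n20: "(20::'a mod_ring) \<noteq> 0" by (rule nz_prod[OF _ n4 n5]) simp
  have m4: "\<not>(\<exists>v::'a mod_ring. v^2 = -4)" using legendre_nsq[OF leg] by simp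
  have m1: "\<not>(\<exists>v::'a mod_ring. v^2 = -1)"
  proof
    assume "\<exists>v::'a mod_ring. v^2 = -1"
    then obtain v :: "'a mod_ring" where v: "v^2 = -1" by blast
    have "(2*v)^2 = 4*v^2" by (simp add: power_mult_distrib)
    also have "\<dots> = -4" using v by simp
    finally show False using m4 by blast
  qed
  obtain z :: "'a mod_ring" where phi: "z^4+z^3+z^2+z+1 = 0" using prim5[OF l1] by blast
  define s where "s = 2*(z+z^4)+1"
  define x where "x = 2*(z-z^4)"
  have s: "s^2 = 5" unfolding s_def by (rule cert_z[OF idI2 phi])
  have x: "x^2 = -2*(5+s)" unfolding x_def s_def by (rule cert_z[OF idI3 phi])
  have s0: "s \<noteq> 0" using s n5 by auto
  define a where "a = 9+s"
  define b where "b = 9-s"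
  have e13: "(5+s)*(5-s) = 20" by (rule cert_s0[OF idI13 s])
  have "5+s \<noteq> 0" using e13 n20 by auto
  then have m1': "6*(5+s) \<noteq> 0" using n6 by (metis mult_eq_0_iff)
  have m2: "12*s \<noteq> 0" using n12 s0 by simp
  have e11: "(a^2+4)*x^2 = -1*(6*(5+s))^2" unfolding a_def by (rule cert_sx[OF idI11 x s])
  have e12: "(b^2+4)*x^2 = -1*(12*s)^2" unfolding b_def by (rule cert_sx[OF idI12 x s])
  have ia: "irreducible [:-1,a,1:]" by (rule irr_of_nsq, rule nsq[OF _ m1' e11]) (use m1 in simp)
  have ib: "irreducible [:-1,b,1:]" by (rule irr_of_nsq, rule nsq[OF _ m2 e12]) (use m1 in simp)
  have "(red f1728 :: 'a mod_ring poly) = [:-1,a,1:]*[:-1,b,1:]"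
  proof -
    have ab76: "a*b = 76" unfolding a_def b_def by (rule cert_s0[OF idI10 s])
    have "a+b = 18" unfolding a_def b_def by simp
    then show ?thesis unfolding quad_prod using ab76 by (simp add: red_def f1728_def)
  qed
  then show ?thesis using ia ib by blast
qed

theorem proposition2p1:
  fixes l :: nat
  assumes "prime l" and "CARD('p::prime_card) = l"
  shows
   "(l mod 5 = 4 \<and> Legendre (-3) (int l) = -1 \<longrightarrow>
      (\<exists>R :: 'p mod_ring set. card R = 4 \<and> (red f0 :: 'p mod_ring poly) = (\<Prod>r\<in>R. [:-r, 1:])))
    \<and> (l mod 5 = 4 \<and> Legendre (-4) (int l) = -1 \<longrightarrow>
      (\<exists>R :: 'p mod_ring set. card R = 4 \<and> (red f1728 :: 'p mod_ring poly) = (\<Prod>r\<in>R. [:-r, 1:])))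
    \<and> (l mod 5 = 1 \<and> Legendre (-3) (int l) = -1 \<longrightarrow>
      (\<exists>a b :: 'p mod_ring. (red f0 :: 'p mod_ring poly) = [:-1, a, 1:] * [:-1, b, 1:]
          \<and> irreducible [:-1, a, 1:] \<and> irreducible [:-1, b, 1:]))
    \<and> (l mod 5 = 1 \<and> Legendre (-4) (int l) = -1 \<longrightarrow>
      (\<exists>a b :: 'p mod_ring. (red f1728 :: 'p mod_ring poly) = [:-1, a, 1:] * [:-1, b, 1:]
          \<and> irreducible [:-1, a, 1:] \<and> irreducible [:-1, b, 1:]))"
  using case_a[where 'a='p] case_b[where 'a='p] case_c[where 'a='p] case_d[where 'a='p] assms(2)
  by blast

end
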